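(* Suppose $V \models \mathsf{ZF}^- + \mathsf{DC}_\mu$-Scheme, where $\mu$ is an infinite cardinal. Then for any proper class $\mathcal{C}$ definable (with parameters) over $V$, there is a subset $b \subseteq \mathcal{C}$ of cardinality $\mu$.
   Context: $\mathsf{ZF}^-$ denotes $\mathsf{ZF}$ without Power Set, with the Collection Scheme (plus Empty Set, Extensionality, Pairing, Union, Infinity, Foundation, Separation and Replacement Schemes). For an infinite cardinal $\mu$, the $\mathsf{DC}_\mu$-Scheme is the scheme: for all formulas $\varphi,\psi$ and sets $u,w$, if there is $y$ with $\psi(y,u)$ and for every $\alpha < \mu$ and every sequence $s = \langle x_\beta : \beta < \alpha\rangle$ with $\psi(x_\beta,u)$ for all $\beta$ there is $z$ with $\psi(z,u)$ and $\varphi(s,z,w)$, then there is a function $f$ with domain $\mu$ such that for each $\alpha < \mu$, $\psi(f(\alpha),u)$ and $\varphi(f\restriction\alpha, f(\alpha), w)$. *)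

theory Defs
  imports Main
begin

datatype form =
    FMem nat nat
  | FEq nat nat
  | FNeg form
  | FConj form form
  | FEx nat form

primrec sat :: "'a set \<Rightarrow> ('a \<Rightarrow> 'a \<Rightarrow> bool) \<Rightarrow> form \<Rightarrow> (nat \<Rightarrow> 'a) \<Rightarrow> bool" where
  "sat M E (FMem i j) s = E (s i) (s j)"
| "sat M E (FEq i j) s = (s i = s j)"
| "sat M E (FNeg \<phi>) s = (\<not> sat M E \<phi> s)"
| "sat M E (FConj \<phi> \<psi>) s = (sat M E \<phi> s \<and> sat M E \<psi> s)"
| "sat M E (FEx i \<phi>) s = (\<exists>a\<in>M. sat M E \<phi> (s(i := a)))"

definition assignment :: "'a set \<Rightarrow> (nat \<Rightarrow> 'a) \<Rightarrow> bool" where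
  "assignment M s \<longleftrightarrow> (\<forall>i. s i \<in> M)"

definition is_empty :: "'a set \<Rightarrow> ('a \<Rightarrow> 'a \<Rightarrow> bool) \<Rightarrow> 'a \<Rightarrow> bool" where
  "is_empty M E x \<longleftrightarrow> (\<forall>z\<in>M. \<not> E z x)"

definition is_upair :: "'a set \<Rightarrow> ('a \<Rightarrow> 'a \<Rightarrow> bool) \<Rightarrow> 'a \<Rightarrow> 'a \<Rightarrow> 'a \<Rightarrow> bool" where
  "is_upair M E z a b \<longleftrightarrow> (\<forall>w\<in>M. E w z \<longleftrightarrow> (w = a \<or> w = b))"

text \<open>Kuratowski ordered pair: p = {{a},{a,b}}.\<close>
definition is_opair :: "'a set \<Rightarrow> ('a \<Rightarrow> 'a \<Rightarrow> bool) \<Rightarrow> 'a \<Rightarrow> 'a \<Rightarrow> 'a \<Rightarrow> bool" where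
  "is_opair M E p a b \<longleftrightarrow>
     (\<exists>c\<in>M. \<exists>d\<in>M. is_upair M E c a a \<and> is_upair M E d a b \<and> is_upair M E p c d)"

definition is_succ :: "'a set \<Rightarrow> ('a \<Rightarrow> 'a \<Rightarrow> bool) \<Rightarrow> 'a \<Rightarrow> 'a \<Rightarrow> bool" where
  "is_succ M E x y \<longleftrightarrow> (\<forall>z\<in>M. E z x \<longleftrightarrow> (E z y \<or> z = y))"

definition in_graph :: "'a set \<Rightarrow> ('a \<Rightarrow> 'a \<Rightarrow> bool) \<Rightarrow> 'a \<Rightarrow> 'a \<Rightarrow> 'a \<Rightarrow> bool" where
  "in_graph M E f a b \<longleftrightarrow> (\<exists>p\<in>M. E p f \<and> is_opair M E p a b)"

definition is_function :: "'a set \<Rightarrow> ('a \<Rightarrow> 'a \<Rightarrow> bool) \<Rightarrow> 'a \<Rightarrow> bool" where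
  "is_function M E f \<longleftrightarrow>
     (\<forall>p\<in>M. E p f \<longrightarrow> (\<exists>a\<in>M. \<exists>b\<in>M. is_opair M E p a b)) \<and>
     (\<forall>a\<in>M. \<forall>b\<in>M. \<forall>b'\<in>M. in_graph M E f a b \<and> in_graph M E f a b' \<longrightarrow> b = b')"

definition has_domain :: "'a set \<Rightarrow> ('a \<Rightarrow> 'a \<Rightarrow> bool) \<Rightarrow> 'a \<Rightarrow> 'a \<Rightarrow> bool" where
  "has_domain M E f d \<longleftrightarrow> (\<forall>a\<in>M. E a d \<longleftrightarrow> (\<exists>b\<in>M. in_graph M E f a b))"

definition is_restriction :: "'a set \<Rightarrow> ('a \<Rightarrow> 'a \<Rightarrow> bool) \<Rightarrow> 'a \<Rightarrow> 'a \<Rightarrow> 'a \<Rightarrow> bool" where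
  "is_restriction M E g f x \<longleftrightarrow>
     (\<forall>p\<in>M. E p g \<longleftrightarrow> (E p f \<and> (\<exists>a\<in>M. \<exists>b\<in>M. is_opair M E p a b \<and> E a x)))"

definition is_bijection :: "'a set \<Rightarrow> ('a \<Rightarrow> 'a \<Rightarrow> bool) \<Rightarrow> 'a \<Rightarrow> 'a \<Rightarrow> 'a \<Rightarrow> bool" where
  "is_bijection M E f x y \<longleftrightarrow>
     is_function M E f \<and> has_domain M E f x \<and>
     (\<forall>b\<in>M. E b y \<longleftrightarrow> (\<exists>a\<in>M. in_graph M E f a b)) \<and>
     (\<forall>a\<in>M. \<forall>a'\<in>M. \<forall>b\<in>M. in_graph M E f a b \<and> in_graph M E f a' b \<longrightarrow> a = a')"

definition equipotent :: "'a set \<Rightarrow> ('a \<Rightarrow> 'a \<Rightarrow> bool) \<Rightarrow> 'a \<Rightarrow> 'a \<Rightarrow> bool" where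
  "equipotent M E x y \<longleftrightarrow> (\<exists>f\<in>M. is_bijection M E f x y)"

text \<open>Ordinal: transitive set linearly ordered by membership (well-foundedness is
  provided by the Foundation axiom in the models considered).\<close>
definition is_ordinal :: "'a set \<Rightarrow> ('a \<Rightarrow> 'a \<Rightarrow> bool) \<Rightarrow> 'a \<Rightarrow> bool" where
  "is_ordinal M E x \<longleftrightarrow>
     (\<forall>y\<in>M. \<forall>z\<in>M. E y x \<and> E z y \<longrightarrow> E z x) \<and>
     (\<forall>y\<in>M. \<forall>z\<in>M. E y x \<and> E z x \<longrightarrow> (E y z \<or> y = z \<or> E z y))"

definition is_nat :: "'a set \<Rightarrow> ('a \<Rightarrow> 'a \<Rightarrow> bool) \<Rightarrow> 'a \<Rightarrow> bool" where
  "is_nat M E n \<longleftrightarrow> is_ordinal M E n \<and>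
     (\<forall>x\<in>M. (x = n \<or> E x n) \<longrightarrow> (is_empty M E x \<or> (\<exists>y\<in>M. is_succ M E x y)))"

definition is_omega :: "'a set \<Rightarrow> ('a \<Rightarrow> 'a \<Rightarrow> bool) \<Rightarrow> 'a \<Rightarrow> bool" where
  "is_omega M E w \<longleftrightarrow> (\<forall>x\<in>M. E x w \<longleftrightarrow> is_nat M E x)"

definition is_cardinal :: "'a set \<Rightarrow> ('a \<Rightarrow> 'a \<Rightarrow> bool) \<Rightarrow> 'a \<Rightarrow> bool" where
  "is_cardinal M E k \<longleftrightarrow> is_ordinal M E k \<and> (\<forall>b\<in>M. E b k \<longrightarrow> \<not> equipotent M E b k)"

definition is_infinite_cardinal :: "'a set \<Rightarrow> ('a \<Rightarrow> 'a \<Rightarrow> bool) \<Rightarrow> 'a \<Rightarrow> bool" where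
  "is_infinite_cardinal M E k \<longleftrightarrow> is_cardinal M E k \<and>
     (\<exists>w\<in>M. is_omega M E w \<and> (w = k \<or> E w k))"

definition zf_minus :: "'a set \<Rightarrow> ('a \<Rightarrow> 'a \<Rightarrow> bool) \<Rightarrow> bool" where
  "zf_minus M E \<longleftrightarrow>
     \<comment> \<open>Extensionality\<close>
     (\<forall>x\<in>M. \<forall>y\<in>M. (\<forall>z\<in>M. E z x \<longleftrightarrow> E z y) \<longrightarrow> x = y) \<and>
     \<comment> \<open>Empty Set\<close>
     (\<exists>x\<in>M. is_empty M E x) \<and>
     \<comment> \<open>Pairing\<close>
     (\<forall>a\<in>M. \<forall>b\<in>M. \<exists>c\<in>M. is_upair M E c a b) \<and>
     \<comment> \<open>Union\<close>
     (\<forall>x\<in>M. \<exists>u\<in>M. \<forall>z\<in>M. E z u \<longleftrightarrow> (\<exists>y\<in>M. E z y \<and> E y x)) \<and>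
     \<comment> \<open>Infinity\<close>
     (\<exists>x\<in>M. (\<exists>e\<in>M. E e x \<and> is_empty M E e) \<and>
             (\<forall>y\<in>M. E y x \<longrightarrow> (\<exists>sy\<in>M. E sy x \<and> is_succ M E sy y))) \<and>
     \<comment> \<open>Foundation\<close>
     (\<forall>x\<in>M. (\<exists>y\<in>M. E y x) \<longrightarrow> (\<exists>y\<in>M. E y x \<and> (\<forall>z\<in>M. \<not> (E z y \<and> E z x)))) \<and>
     \<comment> \<open>Separation Scheme (the separated variable is 0; parameters come from s)\<close>
     (\<forall>\<phi> s. assignment M s \<longrightarrow>
        (\<forall>x\<in>M. \<exists>y\<in>M. \<forall>z\<in>M. E z y \<longleftrightarrow> (E z x \<and> sat M E \<phi> (s(0 := z))))) \<and>
     \<comment> \<open>Replacement Scheme (variables 0 and 1 are the argument and value)\<close>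
     (\<forall>\<phi> s. assignment M s \<longrightarrow>
        (\<forall>x\<in>M. (\<forall>a\<in>M. E a x \<longrightarrow> (\<exists>!b. b \<in> M \<and> sat M E \<phi> (s(0 := a, 1 := b)))) \<longrightarrow>
           (\<exists>y\<in>M. \<forall>b\<in>M. E b y \<longleftrightarrow> (\<exists>a\<in>M. E a x \<and> sat M E \<phi> (s(0 := a, 1 := b)))))) \<and>
     \<comment> \<open>Collection Scheme\<close>
     (\<forall>\<phi> s. assignment M s \<longrightarrow>
        (\<forall>x\<in>M. (\<forall>a\<in>M. E a x \<longrightarrow> (\<exists>b\<in>M. sat M E \<phi> (s(0 := a, 1 := b)))) \<longrightarrow>
           (\<exists>y\<in>M. \<forall>a\<in>M. E a x \<longrightarrow> (\<exists>b\<in>M. E b y \<and> sat M E \<phi> (s(0 := a, 1 := b))))))"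

text \<open>\<psi>(y,u) is evaluated as sat \<psi> (s(0:=y)); \<phi>(seq,z,w) as sat \<phi> (s(0:=seq,1:=z));
  the parameters u, w are supplied by the assignment s.\<close>

definition dc_scheme :: "'a set \<Rightarrow> ('a \<Rightarrow> 'a \<Rightarrow> bool) \<Rightarrow> 'a \<Rightarrow> bool" where
  "dc_scheme M E \<mu> \<longleftrightarrow>
    (\<forall>\<phi> \<psi> s. assignment M s \<longrightarrow>
      ((\<exists>y\<in>M. sat M E \<psi> (s(0 := y))) \<and>
       (\<forall>\<alpha>\<in>M. E \<alpha> \<mu> \<longrightarrow>
          (\<forall>sq\<in>M. is_function M E sq \<and> has_domain M E sq \<alpha> \<and>
                   (\<forall>\<beta>\<in>M. \<forall>x\<in>M. in_graph M E sq \<beta> x \<longrightarrow> sat M E \<psi> (s(0 := x))) \<longrightarrow>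
             (\<exists>z\<in>M. sat M E \<psi> (s(0 := z)) \<and> sat M E \<phi> (s(0 := sq, 1 := z)))))
       \<longrightarrow>
       (\<exists>f\<in>M. is_function M E f \<and> has_domain M E f \<mu> \<and>
          (\<forall>\<alpha>\<in>M. E \<alpha> \<mu> \<longrightarrow>
             (\<exists>g\<in>M. \<exists>z\<in>M. in_graph M E f \<alpha> z \<and> is_restriction M E g f \<alpha> \<and>
                sat M E \<psi> (s(0 := z)) \<and> sat M E \<phi> (s(0 := g, 1 := z)))))))"

text \<open>The class defined by \<chi> with parameters s: {x \<in> M. M \<Turnstile> \<chi>[s(0:=x)]}.
  It is a proper class if it is not the extension of any element of M.\<close>
definition proper_class :: "'a set \<Rightarrow> ('a \<Rightarrow> 'a \<Rightarrow> bool) \<Rightarrow> ('a \<Rightarrow> bool) \<Rightarrow> bool" where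
  "proper_class M E C \<longleftrightarrow> \<not> (\<exists>y\<in>M. \<forall>x\<in>M. E x y \<longleftrightarrow> C x)"

end

theory Submission
  imports Defs
begin

definition FAll :: "nat \<Rightarrow> form \<Rightarrow> form" where "FAll i p = FNeg (FEx i (FNeg p))"
definition FOr :: "form \<Rightarrow> form \<Rightarrow> form" where "FOr p q = FNeg (FConj (FNeg p) (FNeg q))"
definition FIff :: "form \<Rightarrow> form \<Rightarrow> form" where
  "FIff p q = FConj (FNeg (FConj p (FNeg q))) (FNeg (FConj q (FNeg p)))"
definition UP :: "nat \<Rightarrow> nat \<Rightarrow> nat \<Rightarrow> nat \<Rightarrow> form" where
  "UP z a b w = FAll w (FIff (FMem w z) (FOr (FEq w a) (FEq w b)))"
definition OP :: "nat \<Rightarrow> nat \<Rightarrow> nat \<Rightarrow> nat \<Rightarrow> nat \<Rightarrow> nat \<Rightarrow> form" where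
  "OP p a b c d w = FEx c (FEx d (FConj (UP c a a w) (FConj (UP d a b w) (UP p c d w))))"
definition IG :: "nat \<Rightarrow> nat \<Rightarrow> nat \<Rightarrow> nat \<Rightarrow> nat \<Rightarrow> nat \<Rightarrow> nat \<Rightarrow> form" where
  "IG f a b q c d w = FEx q (FConj (FMem q f) (OP q a b c d w))"

lemma sat_UP: "w \<noteq> z \<Longrightarrow> w \<noteq> a \<Longrightarrow> w \<noteq> b \<Longrightarrow>
   sat M E (UP z a b w) s = is_upair M E (s z) (s a) (s b)"
  by (auto simp: UP_def FAll_def FIff_def FOr_def is_upair_def)

lemma sat_OP: "c \<noteq> d \<Longrightarrow> w \<noteq> c \<Longrightarrow> w \<noteq> d \<Longrightarrow> w \<noteq> a \<Longrightarrow> w \<noteq> b \<Longrightarrow> w \<noteq> p \<Longrightarrow>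
   a \<noteq> c \<Longrightarrow> a \<noteq> d \<Longrightarrow> b \<noteq> c \<Longrightarrow> b \<noteq> d \<Longrightarrow> p \<noteq> c \<Longrightarrow> p \<noteq> d \<Longrightarrow>
   sat M E (OP p a b c d w) s = is_opair M E (s p) (s a) (s b)"
  by (simp add: OP_def sat_UP is_opair_def)

lemma sat_IG: "q \<noteq> f \<Longrightarrow> q \<noteq> a \<Longrightarrow> q \<noteq> b \<Longrightarrow>
   c \<noteq> d \<Longrightarrow> w \<noteq> c \<Longrightarrow> w \<noteq> d \<Longrightarrow> w \<noteq> a \<Longrightarrow> w \<noteq> b \<Longrightarrow> w \<noteq> q \<Longrightarrow>
   a \<noteq> c \<Longrightarrow> a \<noteq> d \<Longrightarrow> b \<noteq> c \<Longrightarrow> b \<noteq> d \<Longrightarrow> q \<noteq> c \<Longrightarrow> q \<noteq> d \<Longrightarrow>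
   sat M E (IG f a b q c d w) s = in_graph M E (s f) (s a) (s b)"
  by (simp add: IG_def sat_OP in_graph_def)

lemma opair_inj:
  assumes "a \<in> M" "b \<in> M" "a' \<in> M" "b' \<in> M"
    and "is_opair M E p a b" "is_opair M E p a' b'"
  shows "a = a' \<and> b = b'"
  using assms unfolding is_opair_def is_upair_def
  by metis


lemma opair_exists:
  assumes "zf_minus M E" "a \<in> M" "b \<in> M"
  shows "\<exists>p\<in>M. is_opair M E p a b"
proof -
  have pr: "\<forall>a\<in>M. \<forall>b\<in>M. \<exists>c\<in>M. is_upair M E c a b" using assms(1) by (simp add: zf_minus_def)
  obtain c where "c \<in> M" "is_upair M E c a a" using pr assms by blast
  moreover obtain d where "d \<in> M" "is_upair M E d a b" using pr assms by blast
  moreover obtain p where "p \<in> M" "is_upair M E p c d" using pr calculation by blast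
  ultimately show ?thesis unfolding is_opair_def by blast
qed

lemma range_UU:
  assumes u1: "\<forall>z\<in>M. E z u1 \<longleftrightarrow> (\<exists>y\<in>M. E z y \<and> E y f)"
    and u2: "\<forall>z\<in>M. E z u2 \<longleftrightarrow> (\<exists>y\<in>M. E z y \<and> E y u1)"
    and "in_graph M E f a z" "z \<in> M"
  shows "E z u2"
proof -
  obtain p c d where "p \<in> M" "E p f" "c \<in> M" "d \<in> M" "is_upair M E d a z" "is_upair M E p c d"
    using assms(3) unfolding in_graph_def is_opair_def by blast
  then have "E z d" "E d p" using assms(4) unfolding is_upair_def by auto
  then show ?thesis using u1 u2 \<open>p \<in> M\<close> \<open>d \<in> M\<close> \<open>E p f\<close> \<open>z \<in> M\<close> by blast
qed

theorem theorem6p4: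
  fixes M :: "'a set" and E :: "'a \<Rightarrow> 'a \<Rightarrow> bool" and \<mu> :: 'a
  assumes "zf_minus M E"
    and "\<mu> \<in> M" and "is_infinite_cardinal M E \<mu>"
    and "dc_scheme M E \<mu>"
  shows "\<forall>\<chi> s. assignment M s \<longrightarrow> proper_class M E (\<lambda>x. sat M E \<chi> (s(0 := x))) \<longrightarrow>
           (\<exists>b\<in>M. (\<forall>x\<in>M. E x b \<longrightarrow> sat M E \<chi> (s(0 := x))) \<and> equipotent M E b \<mu>)"
proof (intro allI impI)
  fix \<chi> s
  assume as: "assignment M s" and pc: "proper_class M E (\<lambda>x. sat M E \<chi> (s(0 := x)))"
  define C where "C x = sat M E \<chi> (s(0 := x))" for x
  have pc': "\<not> (\<exists>y\<in>M. \<forall>x\<in>M. E x y \<longleftrightarrow> C x)" using pc by (simp add: proper_class_def C_def)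
  have zf: "zf_minus M E" by fact
  have empty: "\<exists>x\<in>M. is_empty M E x" using zf by (simp add: zf_minus_def)
  have union: "\<forall>x\<in>M. \<exists>u\<in>M. \<forall>z\<in>M. E z u \<longleftrightarrow> (\<exists>y\<in>M. E z y \<and> E y x)"
    using zf by (simp add: zf_minus_def)
  have sep: "\<And>\<phi> s. assignment M s \<Longrightarrow>
        (\<forall>x\<in>M. \<exists>y\<in>M. \<forall>z\<in>M. E z y \<longleftrightarrow> (E z x \<and> sat M E \<phi> (s(0 := z))))"
    using zf by (simp add: zf_minus_def)
  have coll0: "\<forall>\<phi> s. assignment M s \<longrightarrow>
        (\<forall>x\<in>M. (\<forall>a\<in>M. E a x \<longrightarrow> (\<exists>b\<in>M. sat M E \<phi> (s(0 := a, 1 := b)))) \<longrightarrow>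
           (\<exists>y\<in>M. \<forall>a\<in>M. E a x \<longrightarrow> (\<exists>b\<in>M. E b y \<and> sat M E \<phi> (s(0 := a, 1 := b)))))"
    using zf unfolding zf_minus_def by (elim conjE) assumption
  have UU: "\<exists>u2\<in>M. \<forall>a z. in_graph M E x a z \<longrightarrow> z \<in> M \<longrightarrow> E z u2" if xM: "x \<in> M" for x
  proof -
    obtain u1 where u1: "u1 \<in> M" "\<forall>z\<in>M. E z u1 \<longleftrightarrow> (\<exists>y\<in>M. E z y \<and> E y x)"
      using bspec[OF union xM] by (elim bexE)
    obtain u2 where u2: "u2 \<in> M" "\<forall>z\<in>M. E z u2 \<longleftrightarrow> (\<exists>y\<in>M. E z y \<and> E y u1)"
      using bspec[OF union u1(1)] by (elim bexE)
    show ?thesis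
    proof (intro bexI allI impI)
      fix a z assume "in_graph M E x a z" "z \<in> M"
      then show "E z u2" by (rule range_UU[OF u1(2) u2(2)])
    qed (rule u2(1))
  qed
  have nonempty: "\<exists>y\<in>M. C y"
  proof (rule ccontr)
    assume "\<not> ?thesis"
    moreover obtain e where "e \<in> M" "is_empty M E e" using empty by blast
    ultimately show False using pc' unfolding is_empty_def by blast
  qed
  have notcover: "\<exists>z\<in>M. C z \<and> \<not> (\<exists>a\<in>M. in_graph M E sq a z)" if sqM: "sq \<in> M" for sq
  proof (rule ccontr)
    assume nc: "\<not> ?thesis"
    obtain u2 where u2: "u2 \<in> M" "\<forall>a z. in_graph M E sq a z \<longrightarrow> z \<in> M \<longrightarrow> E z u2"
      using UU[OF sqM] by (elim bexE)
    obtain y where "y \<in> M" "\<forall>z\<in>M. E z y \<longleftrightarrow> (E z u2 \<and> C z)"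
      using sep[OF as] u2 unfolding C_def by blast
    then have "\<forall>z\<in>M. E z y \<longleftrightarrow> C z" using nc u2 by blast
    then show False using pc' \<open>y \<in> M\<close> by blast
  qed
  define \<phi> where "\<phi> = FNeg (FEx 2 (IG 0 2 1 3 4 5 6))"
  have sat\<phi>: "sat M E \<phi> (s(0 := sq, 1 := z)) \<longleftrightarrow> \<not> (\<exists>a\<in>M. in_graph M E sq a z)" for sq z
    by (simp add: \<phi>_def sat_IG)
  have dc: "\<exists>f\<in>M. is_function M E f \<and> has_domain M E f \<mu> \<and>
          (\<forall>\<alpha>\<in>M. E \<alpha> \<mu> \<longrightarrow>
             (\<exists>g\<in>M. \<exists>z\<in>M. in_graph M E f \<alpha> z \<and> is_restriction M E g f \<alpha> \<and>
                C z \<and> \<not> (\<exists>a\<in>M. in_graph M E g a z)))"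
  proof -
    have "(\<exists>y\<in>M. sat M E \<chi> (s(0 := y))) \<and>
       (\<forall>\<alpha>\<in>M. E \<alpha> \<mu> \<longrightarrow>
          (\<forall>sq\<in>M. is_function M E sq \<and> has_domain M E sq \<alpha> \<and>
                   (\<forall>\<beta>\<in>M. \<forall>x\<in>M. in_graph M E sq \<beta> x \<longrightarrow> sat M E \<chi> (s(0 := x))) \<longrightarrow>
             (\<exists>z\<in>M. sat M E \<chi> (s(0 := z)) \<and> sat M E \<phi> (s(0 := sq, 1 := z)))))"
      using nonempty notcover unfolding sat\<phi> C_def by blast
    from mp[OF mp[OF spec[OF spec[OF spec[OF assms(4)[unfolded dc_scheme_def], of \<phi>], of \<chi>], of s] as] this]
    show ?thesis unfolding sat\<phi> C_def .
  qed
  then obtain f where f: "f \<in> M" "is_function M E f" "has_domain M E f \<mu>"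
    "\<And>\<alpha>. \<alpha> \<in> M \<Longrightarrow> E \<alpha> \<mu> \<Longrightarrow>
             (\<exists>g\<in>M. \<exists>z\<in>M. in_graph M E f \<alpha> z \<and> is_restriction M E g f \<alpha> \<and>
                C z \<and> \<not> (\<exists>a\<in>M. in_graph M E g a z))" by blast
  have fn: "z = z'" if "a \<in> M" "z \<in> M" "z' \<in> M" "in_graph M E f a z" "in_graph M E f a z'" for a z z'
    using f(2) that unfolding is_function_def by blast
  have F1: "C z" if th: "a \<in> M" "z \<in> M" "in_graph M E f a z" for a z
  proof -
    have "E a \<mu>" using f(3) that unfolding has_domain_def by blast
    then obtain z' where "z' \<in> M" "in_graph M E f a z'" "C z'" using f(4) th by blast
    then show ?thesis using fn th by blast
  qed
  have F2a: False if th: "a \<in> M" "a' \<in> M" "z \<in> M" "in_graph M E f a z" "in_graph M E f a' z" "E a a'"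
    for a a' z
  proof -
    have "E a' \<mu>" using f(3) that unfolding has_domain_def by blast
    then obtain g z' where g: "g \<in> M" "z' \<in> M" "in_graph M E f a' z'" "is_restriction M E g f a'"
        "\<not> (\<exists>a\<in>M. in_graph M E g a z')" using f(4) th by blast
    have "z' = z" using fn g th by blast
    obtain p where p: "p \<in> M" "E p f" "is_opair M E p a z" using th(4) unfolding in_graph_def by blast
    have "E p g" using g(4) p th unfolding is_restriction_def by blast
    then have "in_graph M E g a z" using p unfolding in_graph_def by blast
    then show False using g \<open>z' = z\<close> th by blast
  qed
  have ordm: "is_ordinal M E \<mu>" using assms(3) by (simp add: is_infinite_cardinal_def is_cardinal_def)
  have F2: "a = a'" if "a \<in> M" "a' \<in> M" "z \<in> M" "in_graph M E f a z" "in_graph M E f a' z" for a a' z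
  proof -
    have "E a \<mu>" "E a' \<mu>" using f(3) that unfolding has_domain_def by blast+
    then have "E a a' \<or> a = a' \<or> E a' a" using ordm that unfolding is_ordinal_def by blast
    then show ?thesis using F2a that by blast
  qed
  obtain u2 where u2: "u2 \<in> M" "\<forall>a z. in_graph M E f a z \<longrightarrow> z \<in> M \<longrightarrow> E z u2"
    using UU f(1) by blast
  define \<theta> where "\<theta> = FEx 2 (IG 1 2 0 3 4 5 6)"
  have as0: "assignment M (\<lambda>_. f)" using f(1) by (simp add: assignment_def)
  have sat\<theta>: "sat M E \<theta> ((\<lambda>_. f)(0 := z)) \<longleftrightarrow> (\<exists>a\<in>M. in_graph M E f a z)" for z
    by (simp add: \<theta>_def sat_IG)
  obtain b where b: "b \<in> M" "\<forall>z\<in>M. E z b \<longleftrightarrow> (E z u2 \<and> (\<exists>a\<in>M. in_graph M E f a z))"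
    using sep[OF as0, of \<theta>] u2 unfolding sat\<theta> by blast
  have bchar: "E z b \<longleftrightarrow> (\<exists>a\<in>M. in_graph M E f a z)" if "z \<in> M" for z
    using b u2 that by blast
  define R where "R = FEx 2 (FEx 3 (FConj (OP 0 2 3 4 5 6) (OP 1 3 2 4 5 6)))"
  have satR: "sat M E R ((\<lambda>_. f)(0 := p, 1 := q)) \<longleftrightarrow>
      (\<exists>a\<in>M. \<exists>z\<in>M. is_opair M E p a z \<and> is_opair M E q z a)" for p q
    by (simp add: R_def sat_OP)
  have "\<forall>p\<in>M. E p f \<longrightarrow> (\<exists>q\<in>M. sat M E R ((\<lambda>_. f)(0 := p, 1 := q)))"
  proof (intro ballI impI)
    fix p assume "p \<in> M" "E p f"
    then obtain a z where "a \<in> M" "z \<in> M" "is_opair M E p a z" using f(2) unfolding is_function_def by blast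
    moreover obtain q where "q \<in> M" "is_opair M E q z a" using opair_exists[OF zf] calculation by blast
    ultimately show "\<exists>q\<in>M. sat M E R ((\<lambda>_. f)(0 := p, 1 := q))" unfolding satR by blast
  qed
  then obtain y where y: "y \<in> M" "\<forall>p\<in>M. E p f \<longrightarrow> (\<exists>q\<in>M. E q y \<and>
      (\<exists>a\<in>M. \<exists>z\<in>M. is_opair M E p a z \<and> is_opair M E q z a))"
    using coll0[rule_format, where \<phi>=R and s="\<lambda>_. f", OF as0 f(1)] unfolding satR by blast
  define H where "H = FEx 2 (FEx 3 (FConj (OP 0 3 2 4 5 6) (IG 7 2 3 8 4 5 6)))"
  have satH: "sat M E H ((\<lambda>_. f)(0 := q)) \<longleftrightarrow>
      (\<exists>a\<in>M. \<exists>z\<in>M. is_opair M E q z a \<and> in_graph M E f a z)" for q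
    by (simp add: H_def sat_OP sat_IG)
  obtain h where h: "h \<in> M" "\<forall>q\<in>M. E q h \<longleftrightarrow> (E q y \<and>
      (\<exists>a\<in>M. \<exists>z\<in>M. is_opair M E q z a \<and> in_graph M E f a z))"
    using sep[OF as0, of H] y(1) unfolding satH by blast
  have key: "in_graph M E h z a \<longleftrightarrow> in_graph M E f a z" if th: "z \<in> M" "a \<in> M" for z a
  proof
    assume "in_graph M E h z a"
    then obtain q where q: "q \<in> M" "E q h" "is_opair M E q z a" unfolding in_graph_def by blast
    then obtain a1 z1 where "a1 \<in> M" "z1 \<in> M" "is_opair M E q z1 a1" "in_graph M E f a1 z1"
      using h by blast
    then show "in_graph M E f a z" using opair_inj[of z M a z1 a1 E q] q th by blast
  next
    assume "in_graph M E f a z"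
    then obtain p where p: "p \<in> M" "E p f" "is_opair M E p a z" unfolding in_graph_def by blast
    then obtain q a1 z1 where q: "q \<in> M" "E q y" "a1 \<in> M" "z1 \<in> M" "is_opair M E p a1 z1" "is_opair M E q z1 a1"
      using y by blast
    then have "a1 = a" "z1 = z" using opair_inj[of a M z a1 z1 E p] p th by blast+
    then have "E q h" using h q \<open>in_graph M E f a z\<close> th by blast
    then show "in_graph M E h z a" using q \<open>a1 = a\<close> \<open>z1 = z\<close> unfolding in_graph_def by blast
  qed
  have "is_bijection M E h b \<mu>"
    unfolding is_bijection_def
  proof (intro conjI)
    show "is_function M E h" unfolding is_function_def
    proof (intro conjI ballI impI)
      fix q assume "q \<in> M" "E q h"
      then show "\<exists>a\<in>M. \<exists>b\<in>M. is_opair M E q a b" using h by blast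
    next
      fix z a a' assume "z \<in> M" "a \<in> M" "a' \<in> M" "in_graph M E h z a \<and> in_graph M E h z a'"
      then show "a = a'" using key F2 by blast
    qed
    show "has_domain M E h b" unfolding has_domain_def using key bchar by blast
    show "\<forall>a\<in>M. E a \<mu> \<longleftrightarrow> (\<exists>z\<in>M. in_graph M E h z a)"
      using key f(3) unfolding has_domain_def by blast
    show "\<forall>z\<in>M. \<forall>z'\<in>M. \<forall>a\<in>M. in_graph M E h z a \<and> in_graph M E h z' a \<longrightarrow> z = z'"
      using key fn by blast
  qed
  then have "equipotent M E b \<mu>" using h(1) unfolding equipotent_def by blast
  moreover have "\<forall>x\<in>M. E x b \<longrightarrow> sat M E \<chi> (s(0 := x))"
    using bchar F1 unfolding C_def by blast
  ultimately show "\<exists>b\<in>M. (\<forall>x\<in>M. E x b \<longrightarrow> sat M E \<chi> (s(0 := x))) \<and> equipotent M E b \<mu>"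
    using b(1) by blast
qed

end
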